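(* Let $\phi:M_D(\mathbb{C})\to M_D(\mathbb{C})$ be a primitive unital Schwarz map. Then $\mathcal{M}^\infty_\phi=\bigcap_{n\in\mathbb{N}}\mathcal{M}_{\phi^n}=\mathbb{C}I$.
   Context: $M_D(\mathbb{C})$ is the algebra of complex $D\times D$ matrices. A linear map $\phi$ is a unital Schwarz map if $\phi(I)=I$ and $\phi(a^*a)\ge\phi(a)^*\phi(a)$ for all $a$; it is primitive if some power $\phi^n$ maps every nonzero positive semidefinite matrix to a positive definite matrix. For a unital Schwarz map $\psi$, the multiplicative domain is $\mathcal{M}_\psi=\{a : \psi(a^*a)=\psi(a)^*\psi(a) \text{ and } \psi(aa^* )=\psi(a)\psi(a)^*\}$. For primitive unital Schwarz $\phi$ these form a decreasing sequence $\mathcal{M}_{\phi^{n+1}}\subseteq\mathcal{M}_{\phi^n}$; $\kappa(\phi)$ is the minimal $k$ with $\bigcap_n\mathcal{M}_{\phi^n}=\mathcal{M}_{\phi^k}$, and $\mathcal{M}^\infty_\phi:=\mathcal{M}_{\phi^{\kappa(\phi)}}$. *)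

theory Defs
  imports Complex_Main "Jordan_Normal_Form.Schur_Decomposition"
begin

text \<open>Matrices in M_D(C) are represented as elements of carrier_mat D D :: complex mat.
  A map on M_D(C) is a function complex mat => complex mat, considered on carrier_mat D D.\<close>

definition quad_form :: "complex mat \<Rightarrow> complex vec \<Rightarrow> complex" where
  "quad_form A v = conjugate v \<bullet> (A *\<^sub>v v)"

definition psd :: "nat \<Rightarrow> complex mat \<Rightarrow> bool" where
  "psd D A \<longleftrightarrow> A \<in> carrier_mat D D \<and>
     (\<forall>v \<in> carrier_vec D. Im (quad_form A v) = 0 \<and> Re (quad_form A v) \<ge> 0)"

definition pd :: "nat \<Rightarrow> complex mat \<Rightarrow> bool" where
  "pd D A \<longleftrightarrow> A \<in> carrier_mat D D \<and>
     (\<forall>v \<in> carrier_vec D. v \<noteq> 0\<^sub>v D \<longrightarrow> Im (quad_form A v) = 0 \<and> Re (quad_form A v) > 0)"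

definition lin_map :: "nat \<Rightarrow> (complex mat \<Rightarrow> complex mat) \<Rightarrow> bool" where
  "lin_map D \<phi> \<longleftrightarrow>
     (\<forall>a \<in> carrier_mat D D. \<phi> a \<in> carrier_mat D D) \<and>
     (\<forall>a \<in> carrier_mat D D. \<forall>b \<in> carrier_mat D D. \<phi> (a + b) = \<phi> a + \<phi> b) \<and>
     (\<forall>c. \<forall>a \<in> carrier_mat D D. \<phi> (c \<cdot>\<^sub>m a) = c \<cdot>\<^sub>m \<phi> a)"

definition unital_schwarz :: "nat \<Rightarrow> (complex mat \<Rightarrow> complex mat) \<Rightarrow> bool" where
  "unital_schwarz D \<phi> \<longleftrightarrow> lin_map D \<phi> \<and> \<phi> (1\<^sub>m D) = 1\<^sub>m D \<and>
     (\<forall>a \<in> carrier_mat D D.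
        psd D (\<phi> (mat_adjoint a * a) - mat_adjoint (\<phi> a) * \<phi> a))"

definition primitive :: "nat \<Rightarrow> (complex mat \<Rightarrow> complex mat) \<Rightarrow> bool" where
  "primitive D \<phi> \<longleftrightarrow> (\<exists>n. \<forall>P. psd D P \<and> P \<noteq> 0\<^sub>m D D \<longrightarrow> pd D ((\<phi> ^^ n) P))"

definition mult_domain :: "nat \<Rightarrow> (complex mat \<Rightarrow> complex mat) \<Rightarrow> complex mat set" where
  "mult_domain D \<psi> = {a \<in> carrier_mat D D.
      \<psi> (mat_adjoint a * a) = mat_adjoint (\<psi> a) * \<psi> a \<and>
      \<psi> (a * mat_adjoint a) = \<psi> a * mat_adjoint (\<psi> a)}"

definition mult_domain_inter :: "nat \<Rightarrow> (complex mat \<Rightarrow> complex mat) \<Rightarrow> complex mat set" where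
  "mult_domain_inter D \<phi> = (\<Inter>n \<in> {1..}. mult_domain D (\<phi> ^^ n))"

definition kappa :: "nat \<Rightarrow> (complex mat \<Rightarrow> complex mat) \<Rightarrow> nat" where
  "kappa D \<phi> = (LEAST k. 1 \<le> k \<and> mult_domain_inter D \<phi> = mult_domain D (\<phi> ^^ k))"

definition mult_domain_inf :: "nat \<Rightarrow> (complex mat \<Rightarrow> complex mat) \<Rightarrow> complex mat set" where
  "mult_domain_inf D \<phi> = mult_domain D (\<phi> ^^ kappa D \<phi>)"

end

theory Submission
  imports Defs "Jordan_Normal_Form.Spectral_Radius"
begin


lemma adj_dims[simp]: "dim_row (mat_adjoint A) = dim_col A" "dim_col (mat_adjoint A) = dim_row A"
  unfolding mat_adjoint_def by auto

lemma adj_index[simp]: "i < dim_col A \<Longrightarrow> j < dim_row A \<Longrightarrow> mat_adjoint A $$ (i,j) = cnj (A $$ (j,i))"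
  unfolding mat_adjoint_def by (simp add: mat_of_rows_def)

lemma adj_carrier[simp]: "A \<in> carrier_mat n m \<Longrightarrow> mat_adjoint A \<in> carrier_mat m n"
  unfolding carrier_mat_def by simp

lemma adj_add: "(A::complex mat) \<in> carrier_mat n m \<Longrightarrow> B \<in> carrier_mat n m \<Longrightarrow> mat_adjoint (A + B) = mat_adjoint A + mat_adjoint B"
  by (rule eq_matI) (simp_all add: carrier_matD)

lemma adj_minus: "(A::complex mat) \<in> carrier_mat n m \<Longrightarrow> B \<in> carrier_mat n m \<Longrightarrow> mat_adjoint (A - B) = mat_adjoint A - mat_adjoint B"
  by (rule eq_matI) (simp_all add: carrier_matD)

lemma adj_smult: "mat_adjoint (c \<cdot>\<^sub>m A) = cnj c \<cdot>\<^sub>m mat_adjoint A"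
  by (rule eq_matI) simp_all

lemma adj_one: "mat_adjoint (1\<^sub>m n :: complex mat) = 1\<^sub>m n"
  by (rule eq_matI) simp_all

lemma adj_adj: "mat_adjoint (mat_adjoint (A::complex mat)) = A"
  by (rule eq_matI) simp_all

lemma adj_mult: "(A::complex mat) \<in> carrier_mat n m \<Longrightarrow> B \<in> carrier_mat m k \<Longrightarrow> mat_adjoint (A * B) = mat_adjoint B * mat_adjoint A"
proof (rule eq_matI)
  fix i j assume A: "A \<in> carrier_mat n m" and B: "B \<in> carrier_mat m k"
    and i: "i < dim_row (mat_adjoint B * mat_adjoint A)" and j: "j < dim_col (mat_adjoint B * mat_adjoint A)"
  have i': "i < k" and j': "j < n" using i j A B by auto
  have "mat_adjoint (A * B) $$ (i,j) = cnj ((A*B) $$ (j,i))" using i' j' A B by simp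
  also have "\<dots> = cnj (\<Sum>l<m. A $$ (j,l) * B $$ (l,i))"
    using i' j' A B by (simp add: scalar_prod_def atLeast0LessThan)
  also have "\<dots> = (\<Sum>l<m. cnj (B $$ (l,i)) * cnj (A $$ (j,l)))"
    by (simp add: mult.commute)
  also have "\<dots> = (mat_adjoint B * mat_adjoint A) $$ (i,j)"
    using i' j' A B by (simp add: scalar_prod_def atLeast0LessThan)
  finally show "mat_adjoint (A * B) $$ (i,j) = (mat_adjoint B * mat_adjoint A) $$ (i,j)" .
qed simp_all



definition bf :: "nat \<Rightarrow> complex mat \<Rightarrow> complex vec \<Rightarrow> complex vec \<Rightarrow> complex" where
  "bf n M u v = (\<Sum>i<n. \<Sum>j<n. cnj (u$i) * M$$(i,j) * v$j)"

lemma sum2_cong: "(\<And>i j. i < n \<Longrightarrow> j < n \<Longrightarrow> f i j = g i j) \<Longrightarrow>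
  (\<Sum>i<n. \<Sum>j<n. f i j) = (\<Sum>i<n. \<Sum>j<n. (g i j :: complex))"
  by (rule sum.cong, simp, rule sum.cong, simp_all)

lemma bf_add_mat: "A \<in> carrier_mat n n \<Longrightarrow> B \<in> carrier_mat n n \<Longrightarrow> bf n (A + B) u v = bf n A u v + bf n B u v"
proof -
  assume A: "A \<in> carrier_mat n n" and B: "B \<in> carrier_mat n n"
  have "bf n (A + B) u v = (\<Sum>i<n. \<Sum>j<n. cnj (u$i) * A$$(i,j) * v$j + cnj (u$i) * B$$(i,j) * v$j)"
    unfolding bf_def by (rule sum2_cong) (use A B in \<open>simp add: distrib_left distrib_right\<close>)
  then show ?thesis unfolding bf_def by (simp add: sum.distrib)
qed

lemma bf_minus_mat: "A \<in> carrier_mat n n \<Longrightarrow> B \<in> carrier_mat n n \<Longrightarrow> bf n (A - B) u v = bf n A u v - bf n B u v"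
proof -
  assume A: "A \<in> carrier_mat n n" and B: "B \<in> carrier_mat n n"
  have "bf n (A - B) u v = (\<Sum>i<n. \<Sum>j<n. cnj (u$i) * A$$(i,j) * v$j - cnj (u$i) * B$$(i,j) * v$j)"
    unfolding bf_def by (rule sum2_cong) (use A B in \<open>simp add: right_diff_distrib left_diff_distrib\<close>)
  then show ?thesis unfolding bf_def by (simp add: sum_subtractf)
qed

lemma bf_smult_mat: "A \<in> carrier_mat n n \<Longrightarrow> bf n (c \<cdot>\<^sub>m A) u v = c * bf n A u v"
proof -
  assume A: "A \<in> carrier_mat n n"
  have "bf n (c \<cdot>\<^sub>m A) u v = (\<Sum>i<n. \<Sum>j<n. c * (cnj (u$i) * A$$(i,j) * v$j))"
    unfolding bf_def by (rule sum2_cong) (use A in \<open>simp add: mult.commute mult.left_commute\<close>)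
  then show ?thesis unfolding bf_def by (simp add: sum_distrib_left)
qed

lemma bf_zero_mat: "bf n (0\<^sub>m n n) u v = 0"
proof -
  have "bf n (0\<^sub>m n n) u v = (\<Sum>i<n. \<Sum>j<n. (0::complex))"
    unfolding bf_def by (rule sum2_cong) simp
  then show ?thesis by simp
qed

lemma bf_add_l: "u \<in> carrier_vec n \<Longrightarrow> w \<in> carrier_vec n \<Longrightarrow> bf n M (u + w) v = bf n M u v + bf n M w v"
proof -
  assume A: "u \<in> carrier_vec n" and B: "w \<in> carrier_vec n"
  have "bf n M (u + w) v = (\<Sum>i<n. \<Sum>j<n. cnj (u$i) * M$$(i,j) * v$j + cnj (w$i) * M$$(i,j) * v$j)"
    unfolding bf_def by (rule sum2_cong) (use A B in \<open>simp add: distrib_left distrib_right\<close>)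
  then show ?thesis unfolding bf_def by (simp add: sum.distrib)
qed

lemma bf_add_r: "u \<in> carrier_vec n \<Longrightarrow> w \<in> carrier_vec n \<Longrightarrow> bf n M v (u + w) = bf n M v u + bf n M v w"
proof -
  assume A: "u \<in> carrier_vec n" and B: "w \<in> carrier_vec n"
  have "bf n M v (u + w) = (\<Sum>i<n. \<Sum>j<n. cnj (v$i) * M$$(i,j) * u$j + cnj (v$i) * M$$(i,j) * w$j)"
    unfolding bf_def by (rule sum2_cong) (use A B in \<open>simp add: distrib_left distrib_right\<close>)
  then show ?thesis unfolding bf_def by (simp add: sum.distrib)
qed

lemma bf_smult_l: "u \<in> carrier_vec n \<Longrightarrow> bf n M (c \<cdot>\<^sub>v u) v = cnj c * bf n M u v"
proof -
  assume A: "u \<in> carrier_vec n"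
  have "bf n M (c \<cdot>\<^sub>v u) v = (\<Sum>i<n. \<Sum>j<n. cnj c * (cnj (u$i) * M$$(i,j) * v$j))"
    unfolding bf_def by (rule sum2_cong) (use A in \<open>simp add: mult.commute mult.left_commute\<close>)
  then show ?thesis unfolding bf_def by (simp add: sum_distrib_left)
qed

lemma bf_smult_r: "u \<in> carrier_vec n \<Longrightarrow> bf n M v (c \<cdot>\<^sub>v u) = c * bf n M v u"
proof -
  assume A: "u \<in> carrier_vec n"
  have "bf n M v (c \<cdot>\<^sub>v u) = (\<Sum>i<n. \<Sum>j<n. c * (cnj (v$i) * M$$(i,j) * u$j))"
    unfolding bf_def by (rule sum2_cong) (use A in \<open>simp add: mult.commute mult.left_commute\<close>)
  then show ?thesis unfolding bf_def by (simp add: sum_distrib_left)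
qed



lemma mv_index: "M \<in> carrier_mat n n \<Longrightarrow> v \<in> carrier_vec n \<Longrightarrow> i < n \<Longrightarrow>
  (M *\<^sub>v v) $ i = (\<Sum>j<n. M $$ (i,j) * v $ j)"
proof -
  assume M: "M \<in> carrier_mat n n" and v: "v \<in> carrier_vec n" and i: "i < n"
  have "(M *\<^sub>v v) $ i = row M i \<bullet> v" using M i by (simp add: carrier_matD)
  also have "\<dots> = (\<Sum>j\<in>{0..<n}. row M i $ j * v $ j)" unfolding scalar_prod_def using v by (simp add: carrier_vecD)
  also have "\<dots> = (\<Sum>j<n. M $$ (i,j) * v $ j)"
    by (rule sum.cong) (use M i in \<open>simp_all add: carrier_matD atLeast0LessThan\<close>)
  finally show ?thesis .
qed

lemma mm_index: "A \<in> carrier_mat n n \<Longrightarrow> B \<in> carrier_mat n n \<Longrightarrow> i < n \<Longrightarrow> j < n \<Longrightarrow>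
  (A * B) $$ (i,j) = (\<Sum>l<n. A $$ (i,l) * B $$ (l,j))"
proof -
  assume A: "A \<in> carrier_mat n n" and B: "B \<in> carrier_mat n n" and i: "i < n" and j: "j < n"
  have "(A * B) $$ (i,j) = row A i \<bullet> col B j" using A B i j by (simp add: carrier_matD)
  also have "\<dots> = (\<Sum>l\<in>{0..<n}. row A i $ l * col B j $ l)" unfolding scalar_prod_def using B by (simp add: carrier_matD)
  also have "\<dots> = (\<Sum>l<n. A $$ (i,l) * B $$ (l,j))"
    by (rule sum.cong) (use A B i j in \<open>simp_all add: carrier_matD atLeast0LessThan\<close>)
  finally show ?thesis .
qed

lemma bf_mv: "M \<in> carrier_mat n n \<Longrightarrow> v \<in> carrier_vec n \<Longrightarrow>
   bf n M u v = (\<Sum>i<n. cnj (u$i) * (M *\<^sub>v v)$i)"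
  unfolding bf_def
  by (rule sum.cong) (simp_all add: mv_index sum_distrib_left mult.assoc del: index_mult_mat_vec)

lemma quad_bf: "M \<in> carrier_mat n n \<Longrightarrow> v \<in> carrier_vec n \<Longrightarrow> quad_form M v = bf n M v v"
  unfolding quad_form_def scalar_prod_def
  by (simp add: bf_mv atLeast0LessThan carrier_matD carrier_vecD)

lemma bf_unit: "i < n \<Longrightarrow> j < n \<Longrightarrow> bf n M (unit_vec n i) (unit_vec n j) = M $$ (i,j)"
proof -
  assume i: "i < n" and j: "j < n"
  have "bf n M (unit_vec n i) (unit_vec n j) = (\<Sum>a<n. \<Sum>b<n. if a = i then (if b = j then M $$ (i,j) else 0) else 0)"
    unfolding bf_def by (rule sum2_cong) (use i j in simp)
  also have "\<dots> = (\<Sum>a<n. if a = i then M $$ (i,j) else 0)"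
  proof (rule sum.cong[OF refl])
    fix a show "(\<Sum>b<n. if a = i then (if b = j then M $$ (i,j) else 0) else 0) = (if a = i then M $$ (i,j) else 0)"
      by (cases "a = i") (simp_all add: sum.delta j)
  qed
  also have "\<dots> = M $$ (i,j)" using i by (simp add: sum.delta)
  finally show ?thesis .
qed

lemma bf_adj: "A \<in> carrier_mat n n \<Longrightarrow> bf n (mat_adjoint A) u v = cnj (bf n A v u)"
proof -
  assume A: "A \<in> carrier_mat n n"
  have "bf n (mat_adjoint A) u v = (\<Sum>i<n. \<Sum>j<n. cnj (cnj (v$j) * A $$ (j,i) * u$i))"
    unfolding bf_def by (rule sum2_cong) (use A in \<open>simp add: mult.commute mult.left_commute\<close>)
  also have "\<dots> = (\<Sum>j<n. \<Sum>i<n. cnj (cnj (v$j) * A $$ (j,i) * u$i))"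
    by (rule sum.swap)
  also have "\<dots> = cnj (bf n A v u)" unfolding bf_def by (simp add: cnj_sum)
  finally show ?thesis .
qed

lemma bf_adj_mult: "Y \<in> carrier_mat n n \<Longrightarrow> Z \<in> carrier_mat n n \<Longrightarrow> u \<in> carrier_vec n \<Longrightarrow> v \<in> carrier_vec n \<Longrightarrow>
  bf n (mat_adjoint Y * Z) u v = (\<Sum>l<n. cnj ((Y *\<^sub>v u)$l) * (Z *\<^sub>v v)$l)"
proof -
  assume Y: "Y \<in> carrier_mat n n" and Z: "Z \<in> carrier_mat n n" and u: "u \<in> carrier_vec n" and v: "v \<in> carrier_vec n"
  define F where "F i j l = cnj (u$i) * cnj (Y $$ (l,i)) * Z $$ (l,j) * v$j" for i j l
  have "bf n (mat_adjoint Y * Z) u v = (\<Sum>i<n. \<Sum>j<n. \<Sum>l<n. F i j l)"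
    unfolding bf_def
  proof (rule sum2_cong)
    fix i j assume i: "i < n" and j: "j < n"
    have "(mat_adjoint Y * Z) $$ (i,j) = (\<Sum>l<n. mat_adjoint Y $$ (i,l) * Z $$ (l,j))"
      by (rule mm_index) (use Y Z i j in simp_all)
    also have "\<dots> = (\<Sum>l<n. cnj (Y $$ (l,i)) * Z $$ (l,j))"
      by (rule sum.cong) (use Y Z i j in \<open>simp_all add: carrier_matD\<close>)
    finally have "(mat_adjoint Y * Z) $$ (i,j) = (\<Sum>l<n. cnj (Y $$ (l,i)) * Z $$ (l,j))" .
    then show "cnj (u $ i) * (mat_adjoint Y * Z) $$ (i, j) * v $ j = (\<Sum>l<n. F i j l)"
      unfolding F_def by (simp add: sum_distrib_left sum_distrib_right mult.assoc)
  qed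
  also have "\<dots> = (\<Sum>i<n. \<Sum>l<n. \<Sum>j<n. F i j l)"
    by (rule sum.cong[OF refl], rule sum.swap)
  also have "\<dots> = (\<Sum>l<n. \<Sum>i<n. \<Sum>j<n. F i j l)"
    by (rule sum.swap)
  also have "\<dots> = (\<Sum>l<n. cnj ((Y *\<^sub>v u)$l) * (Z *\<^sub>v v)$l)"
  proof (rule sum.cong[OF refl])
    fix l assume "l \<in> {..<n}" then have l: "l < n" by simp
    have "cnj ((Y *\<^sub>v u)$l) * (Z *\<^sub>v v)$l = (\<Sum>i<n. cnj (Y $$ (l,i) * u $ i)) * (\<Sum>j<n. Z $$ (l,j) * v $ j)"
      using Y Z u v l by (simp add: mv_index cnj_sum del: index_mult_mat_vec)
    also have "\<dots> = (\<Sum>i<n. \<Sum>j<n. F i j l)"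
      unfolding F_def sum_product by (simp add: mult.commute mult.left_commute)
    finally show "(\<Sum>i<n. \<Sum>j<n. F i j l) = cnj ((Y *\<^sub>v u)$l) * (Z *\<^sub>v v)$l" by simp
  qed
  finally show ?thesis .
qed

lemma polarization: assumes M: "M \<in> carrier_mat n n" and z: "\<And>v. v \<in> carrier_vec n \<Longrightarrow> bf n M v v = 0"
  shows "M = 0\<^sub>m n n"
proof (rule eq_matI)
  fix i j assume "i < dim_row (0\<^sub>m n n)" "j < dim_col (0\<^sub>m n n)"
  then have i: "i < n" and j: "j < n" by auto
  let ?ei = "unit_vec n i :: complex vec" and ?ej = "unit_vec n j :: complex vec"
  have ci: "?ei \<in> carrier_vec n" and cj: "?ej \<in> carrier_vec n" by simp_all
  have cij: "\<i> \<cdot>\<^sub>v ?ej \<in> carrier_vec n" by simp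
  have "bf n M (?ei + ?ej) (?ei + ?ej) = 0" using z ci cj by simp
  then have 1: "M $$ (i,j) + M $$ (j,i) = 0"
    using z[OF ci] z[OF cj] by (simp add: bf_add_l bf_add_r ci cj bf_unit i j add.commute)
  have "bf n M (?ei + \<i> \<cdot>\<^sub>v ?ej) (?ei + \<i> \<cdot>\<^sub>v ?ej) = 0" using z ci cij by simp
  then have "cnj \<i> * M $$ (j,i) + \<i> * M $$ (i,j) = 0"
    using z[OF ci] z[OF cj] by (simp add: bf_add_l bf_add_r ci cj cij bf_smult_l bf_smult_r bf_unit i j)
  then have "\<i> * (M $$ (i,j) - M $$ (j,i)) = 0" by (simp add: algebra_simps complex_cnj_i)
  then have 2: "M $$ (i,j) - M $$ (j,i) = 0" by simp
  from 1 2 have "M $$ (i,j) = 0" by (simp add: algebra_simps)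
  then show "M $$ (i,j) = 0\<^sub>m n n $$ (i,j)" using i j by simp
qed (use M in simp_all)



lemma psd_bf: "psd n X \<Longrightarrow> v \<in> carrier_vec n \<Longrightarrow> Im (bf n X v v) = 0 \<and> Re (bf n X v v) \<ge> 0"
  unfolding psd_def using quad_bf by metis

lemma psd_carrier: "psd n X \<Longrightarrow> X \<in> carrier_mat n n"
  unfolding psd_def by simp

lemma psdI: "X \<in> carrier_mat n n \<Longrightarrow> (\<And>v. v \<in> carrier_vec n \<Longrightarrow> Im (bf n X v v) = 0 \<and> Re (bf n X v v) \<ge> 0) \<Longrightarrow> psd n X"
  unfolding psd_def using quad_bf by metis

lemma psd_add: "psd n X \<Longrightarrow> psd n Y \<Longrightarrow> psd n (X + Y)"
  apply (rule psdI)
  using psd_carrier apply (metis add_carrier_mat)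
  using psd_bf psd_carrier by (simp add: bf_add_mat)

lemma psd_smult: "psd n X \<Longrightarrow> r \<ge> 0 \<Longrightarrow> psd n (complex_of_real r \<cdot>\<^sub>m X)"
  apply (rule psdI)
  using psd_carrier apply (metis smult_carrier_mat)
  using psd_bf psd_carrier by (simp add: bf_smult_mat)

lemma psd_zero: "psd n (0\<^sub>m n n)"
  by (rule psdI) (simp_all add: bf_zero_mat)

lemma cnj_mult_self: "Im (cnj z * z) = 0 \<and> Re (cnj z * z) \<ge> 0"
  by simp

lemma psd_adj_mult: "Y \<in> carrier_mat n n \<Longrightarrow> psd n (mat_adjoint Y * Y)"
proof (rule psdI)
  assume Y: "Y \<in> carrier_mat n n"
  then show "mat_adjoint Y * Y \<in> carrier_mat n n" by (metis adj_carrier mult_carrier_mat)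
  fix v :: "complex vec" assume v: "v \<in> carrier_vec n"
  have e: "bf n (mat_adjoint Y * Y) v v = (\<Sum>l<n. cnj ((Y *\<^sub>v v)$l) * (Y *\<^sub>v v)$l)"
    by (rule bf_adj_mult[OF Y Y v v])
  show "Im (bf n (mat_adjoint Y * Y) v v) = 0 \<and> Re (bf n (mat_adjoint Y * Y) v v) \<ge> 0"
    unfolding e by (simp add: Im_sum Re_sum sum_nonneg)
qed

lemma minus_zero_eq: assumes A: "(A::complex mat) \<in> carrier_mat n m" and B: "B \<in> carrier_mat n m" and e: "A - B = 0\<^sub>m n m"
  shows "A = B"
proof (rule eq_matI)
  fix i j assume "i < dim_row B" "j < dim_col B"
  then have i: "i < n" and j: "j < m" using B by auto
  have "(A - B) $$ (i,j) = 0" using e i j by simp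
  then show "A $$ (i,j) = B $$ (i,j)" using A B i j by simp
qed (use A B in simp_all)

lemma psd_hermitian: assumes "psd n X" shows "mat_adjoint X = X"
proof -
  have X: "X \<in> carrier_mat n n" using assms psd_carrier by blast
  have "mat_adjoint X - X = 0\<^sub>m n n"
  proof (rule polarization)
    show "mat_adjoint X - X \<in> carrier_mat n n" using X by (metis adj_carrier minus_carrier_mat)
    fix v :: "complex vec" assume v: "v \<in> carrier_vec n"
    have "Im (bf n X v v) = 0" using psd_bf[OF assms v] by simp
    then show "bf n (mat_adjoint X - X) v v = 0"
      using X by (simp add: bf_minus_mat bf_adj complex_eq_iff)
  qed
  then show ?thesis using X
    by (metis adj_carrier minus_zero_eq)
qed

lemma psd_herm_entry: "psd n X \<Longrightarrow> i < n \<Longrightarrow> j < n \<Longrightarrow> X $$ (i,j) = cnj (X $$ (j,i))"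
  using psd_hermitian psd_carrier adj_index
  by (metis carrier_matD(1) carrier_matD(2))

lemma scalar_cs:
  fixes \<alpha> \<beta> d :: complex
  assumes d: "Im d = 0" "Re d \<ge> 0"
    and H: "\<And>t. Im (t * \<beta> + cnj t * \<alpha> + cnj t * t * d) = 0 \<and> Re (t * \<beta> + cnj t * \<alpha> + cnj t * t * d) \<ge> 0"
  shows "\<alpha> = 0"
proof -
  have h1: "Im (\<beta> + \<alpha>) = 0" using H[of 1] d by simp
  have h2: "Re \<beta> - Re \<alpha> = 0" using H[of "\<i>"] d by simp
  have b: "\<beta> = cnj \<alpha>" using h1 h2 by (simp add: complex_eq_iff)
  define s where "s = 1 / (Re d + 1)"
  have s: "s > 0" "s * Re d < 1" using d unfolding s_def by (simp_all add: field_simps)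
  define N where "N = (Re \<alpha>)\<^sup>2 + (Im \<alpha>)\<^sup>2"
  have aa: "cnj \<alpha> * \<alpha> = complex_of_real N" unfolding N_def
    by (metis complex_mult_cnj mult.commute)
  define t where "t = complex_of_real (-s) * \<alpha>"
  have "t * \<beta> + cnj t * \<alpha> + cnj t * t * d = complex_of_real (-2*s*N) + complex_of_real (s*s*N) * d"
  proof -
    have "t * \<beta> = complex_of_real (-s) * (cnj \<alpha> * \<alpha>)" unfolding t_def b by (simp add: algebra_simps)
    moreover have "cnj t * \<alpha> = complex_of_real (-s) * (cnj \<alpha> * \<alpha>)" unfolding t_def by (simp add: algebra_simps)
    moreover have "cnj t * t * d = complex_of_real (s*s) * (cnj \<alpha> * \<alpha>) * d" unfolding t_def by (simp add: algebra_simps)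
    ultimately show ?thesis unfolding aa by (simp add: algebra_simps)
  qed
  then have "Re (complex_of_real (-2*s*N) + complex_of_real (s*s*N) * d) \<ge> 0"
    using H[of t] by simp
  then have "s * N * (s * Re d - 2) \<ge> 0" using d by (simp add: algebra_simps)
  moreover have "N \<ge> 0" unfolding N_def by simp
  ultimately have "N = 0"
  proof -
    assume P: "0 \<le> s * N * (s * Re d - 2)" and N0: "0 \<le> N"
    show "N = 0"
    proof (rule ccontr)
      assume "N \<noteq> 0" then have "N > 0" using N0 by simp
      moreover have "2 - s * Re d > 0" using s by simp
      ultimately have "s * N * (2 - s * Re d) > 0" using s by simp
      then show False using P by (simp add: algebra_simps)
    qed
  qed
  then show ?thesis unfolding N_def by (simp add: complex_eq_iff)
qed



lemma mult_carrier_sq[simp]: "A \<in> carrier_mat n n \<Longrightarrow> B \<in> carrier_mat n n \<Longrightarrow> A * B \<in> carrier_mat n n"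
  by (rule mult_carrier_mat)

lemma adj_mult_carrier_sq[simp]: "A \<in> carrier_mat n n \<Longrightarrow> B \<in> carrier_mat n n \<Longrightarrow> mat_adjoint A * B \<in> carrier_mat n n"
  by (rule mult_carrier_mat) simp_all

lemma lm_carrier: "lin_map n f \<Longrightarrow> a \<in> carrier_mat n n \<Longrightarrow> f a \<in> carrier_mat n n"
  unfolding lin_map_def by blast
lemma lm_add: "lin_map n f \<Longrightarrow> a \<in> carrier_mat n n \<Longrightarrow> b \<in> carrier_mat n n \<Longrightarrow> f (a + b) = f a + f b"
  unfolding lin_map_def by blast
lemma lm_smult: "lin_map n f \<Longrightarrow> a \<in> carrier_mat n n \<Longrightarrow> f (c \<cdot>\<^sub>m a) = c \<cdot>\<^sub>m f a"
  unfolding lin_map_def by blast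

lemma lm_zero: assumes "lin_map n f" shows "f (0\<^sub>m n n) = 0\<^sub>m n n"
proof -
  have c: "f (0\<^sub>m n n) \<in> carrier_mat n n" using lm_carrier[OF assms] by simp
  have "0\<^sub>m n n = (0::complex) \<cdot>\<^sub>m 0\<^sub>m n n" by (rule eq_matI) simp_all
  then have "f (0\<^sub>m n n) = 0 \<cdot>\<^sub>m f (0\<^sub>m n n)" using lm_smult[OF assms] by (metis zero_carrier_mat)
  also have "\<dots> = 0\<^sub>m n n" by (rule eq_matI) (use c in simp_all)
  finally show ?thesis .
qed

lemma lm_minus: assumes f: "lin_map n f" and a: "a \<in> carrier_mat n n" and b: "b \<in> carrier_mat n n"
  shows "f (a - b) = f a - f b"
proof -
  have fa: "f a \<in> carrier_mat n n" and fb: "f b \<in> carrier_mat n n" using lm_carrier[OF f] a b by auto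
  have "a - b = a + (-1) \<cdot>\<^sub>m b" by (rule eq_matI) (use a b in simp_all)
  then have "f (a - b) = f a + (-1) \<cdot>\<^sub>m f b" using lm_add[OF f] lm_smult[OF f] a b by (metis smult_carrier_mat)
  also have "\<dots> = f a - f b" by (rule eq_matI) (use fa fb in simp_all)
  finally show ?thesis .
qed

lemma lm_comp: "lin_map n f \<Longrightarrow> lin_map n g \<Longrightarrow> lin_map n (f \<circ> g)"
  unfolding lin_map_def comp_def by metis

lemma lm_id: "lin_map n id"
  unfolding lin_map_def by simp

lemma lm_pow: "lin_map n f \<Longrightarrow> lin_map n (f ^^ k)"
  by (induction k) (simp_all add: lm_id lm_comp)

lemma adj_expand: assumes B: "B \<in> carrier_mat n n" and X: "X \<in> carrier_mat n n"
  shows "mat_adjoint (B + t \<cdot>\<^sub>m X) * (B + t \<cdot>\<^sub>m X) =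
    (mat_adjoint B * B + t \<cdot>\<^sub>m (mat_adjoint B * X)) + (cnj t \<cdot>\<^sub>m (mat_adjoint X * B) + cnj t \<cdot>\<^sub>m (t \<cdot>\<^sub>m (mat_adjoint X * X)))"
proof -
  have tX: "t \<cdot>\<^sub>m X \<in> carrier_mat n n" using X by simp
  have BtX: "B + t \<cdot>\<^sub>m X \<in> carrier_mat n n" using tX by simp
  have aB: "mat_adjoint B \<in> carrier_mat n n" and aX: "mat_adjoint X \<in> carrier_mat n n" using B X by simp_all
  have caX: "cnj t \<cdot>\<^sub>m mat_adjoint X \<in> carrier_mat n n" using aX by simp
  have "mat_adjoint (B + t \<cdot>\<^sub>m X) = mat_adjoint B + cnj t \<cdot>\<^sub>m mat_adjoint X"
    using adj_add[OF B tX] adj_smult by simp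
  then have "mat_adjoint (B + t \<cdot>\<^sub>m X) * (B + t \<cdot>\<^sub>m X) = (mat_adjoint B + cnj t \<cdot>\<^sub>m mat_adjoint X) * (B + t \<cdot>\<^sub>m X)" by simp
  also have "\<dots> = mat_adjoint B * (B + t \<cdot>\<^sub>m X) + (cnj t \<cdot>\<^sub>m mat_adjoint X) * (B + t \<cdot>\<^sub>m X)"
    by (rule add_mult_distrib_mat[OF aB caX BtX])
  also have "mat_adjoint B * (B + t \<cdot>\<^sub>m X) = mat_adjoint B * B + mat_adjoint B * (t \<cdot>\<^sub>m X)"
    by (rule mult_add_distrib_mat[OF aB B tX])
  also have "mat_adjoint B * (t \<cdot>\<^sub>m X) = t \<cdot>\<^sub>m (mat_adjoint B * X)"
    by (rule mult_smult_distrib[OF aB X])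
  also have "(cnj t \<cdot>\<^sub>m mat_adjoint X) * (B + t \<cdot>\<^sub>m X) = cnj t \<cdot>\<^sub>m (mat_adjoint X * (B + t \<cdot>\<^sub>m X))"
    by (rule mult_smult_assoc_mat[OF aX BtX])
  also have "mat_adjoint X * (B + t \<cdot>\<^sub>m X) = mat_adjoint X * B + t \<cdot>\<^sub>m (mat_adjoint X * X)"
    using mult_add_distrib_mat[OF aX B tX] mult_smult_distrib[OF aX X] by simp
  also have "cnj t \<cdot>\<^sub>m (mat_adjoint X * B + t \<cdot>\<^sub>m (mat_adjoint X * X)) = cnj t \<cdot>\<^sub>m (mat_adjoint X * B) + cnj t \<cdot>\<^sub>m (t \<cdot>\<^sub>m (mat_adjoint X * X))"
    by (rule add_smult_distrib_left_mat[of _ n n]) (use aX B X in simp_all)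
  finally show ?thesis .
qed

lemma bf_expand: assumes B: "B \<in> carrier_mat n n" and X: "X \<in> carrier_mat n n"
  shows "bf n (mat_adjoint (B + t \<cdot>\<^sub>m X) * (B + t \<cdot>\<^sub>m X)) v v =
    bf n (mat_adjoint B * B) v v + t * bf n (mat_adjoint B * X) v v + cnj t * bf n (mat_adjoint X * B) v v + cnj t * t * bf n (mat_adjoint X * X) v v"
  unfolding adj_expand[OF B X] using B X
  by (simp add: bf_add_mat bf_smult_mat mult.assoc)

lemma bf_expand_lm: assumes f: "lin_map n f" and B: "B \<in> carrier_mat n n" and X: "X \<in> carrier_mat n n"
  shows "bf n (f (mat_adjoint (B + t \<cdot>\<^sub>m X) * (B + t \<cdot>\<^sub>m X))) v v =
    bf n (f (mat_adjoint B * B)) v v + t * bf n (f (mat_adjoint B * X)) v v + cnj t * bf n (f (mat_adjoint X * B)) v v + cnj t * t * bf n (f (mat_adjoint X * X)) v v"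
proof -
  have c1: "mat_adjoint B * B \<in> carrier_mat n n" "mat_adjoint B * X \<in> carrier_mat n n"
     "mat_adjoint X * B \<in> carrier_mat n n" "mat_adjoint X * X \<in> carrier_mat n n" using B X by simp_all
  note fc = lm_carrier[OF f]
  show ?thesis
    unfolding adj_expand[OF B X] using c1 fc
    by (simp add: lm_add[OF f] lm_smult[OF f] bf_add_mat bf_smult_mat mult.assoc fc)
qed



definition schw :: "nat \<Rightarrow> (complex mat \<Rightarrow> complex mat) \<Rightarrow> bool" where
  "schw n f \<longleftrightarrow> (\<forall>a \<in> carrier_mat n n. psd n (f (mat_adjoint a * a) - mat_adjoint (f a) * f a))"

lemma schw_bf: assumes f: "lin_map n f" and S: "schw n f" and a: "a \<in> carrier_mat n n" and v: "v \<in> carrier_vec n"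
  shows "Im (bf n (f (mat_adjoint a * a)) v v - bf n (mat_adjoint (f a) * f a) v v) = 0 \<and>
         Re (bf n (f (mat_adjoint a * a)) v v - bf n (mat_adjoint (f a) * f a) v v) \<ge> 0"
proof -
  have c1: "f (mat_adjoint a * a) \<in> carrier_mat n n" using lm_carrier[OF f] a by simp
  have c2: "mat_adjoint (f a) * f a \<in> carrier_mat n n" using lm_carrier[OF f] a by simp
  have "psd n (f (mat_adjoint a * a) - mat_adjoint (f a) * f a)" using S a unfolding schw_def by blast
  from psd_bf[OF this v] show ?thesis using bf_minus_mat[OF c1 c2] by simp
qed

lemma choi: assumes f: "lin_map n f" and S: "schw n f" and b: "b \<in> carrier_mat n n"
  and eq: "f (mat_adjoint b * b) = mat_adjoint (f b) * f b" and x: "x \<in> carrier_mat n n"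
  shows "f (mat_adjoint x * b) = mat_adjoint (f x) * f b"
proof -
  have fb: "f b \<in> carrier_mat n n" and fx: "f x \<in> carrier_mat n n" using lm_carrier[OF f] b x by auto
  define Sv where "Sv v y z = bf n (f (mat_adjoint y * z)) v v - bf n (mat_adjoint (f y) * f z) v v" for v y z
  have zero: "Sv v x b = 0" if v: "v \<in> carrier_vec n" for v
  proof -
    have H: "Im (t * Sv v b x + cnj t * Sv v x b + cnj t * t * Sv v x x) = 0 \<and>
             Re (t * Sv v b x + cnj t * Sv v x b + cnj t * t * Sv v x x) \<ge> 0" for t
    proof -
      have y: "b + t \<cdot>\<^sub>m x \<in> carrier_mat n n" using x by simp
      have fy: "f (b + t \<cdot>\<^sub>m x) = f b + t \<cdot>\<^sub>m f x" using lm_add[OF f b] lm_smult[OF f x] x by simp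
      have e0: "bf n (f (mat_adjoint b * b)) v v = bf n (mat_adjoint (f b) * f b) v v" using eq by simp
      have "bf n (f (mat_adjoint (b + t \<cdot>\<^sub>m x) * (b + t \<cdot>\<^sub>m x))) v v - bf n (mat_adjoint (f (b + t \<cdot>\<^sub>m x)) * f (b + t \<cdot>\<^sub>m x)) v v
         = t * Sv v b x + cnj t * Sv v x b + cnj t * t * Sv v x x"
        unfolding fy bf_expand_lm[OF f b x] bf_expand[OF fb fx] Sv_def e0
        by (simp add: algebra_simps)
      then show ?thesis using schw_bf[OF f S y v] by simp
    qed
    have d: "Im (Sv v x x) = 0" "Re (Sv v x x) \<ge> 0" using schw_bf[OF f S x v] unfolding Sv_def by simp_all
    show ?thesis by (rule scalar_cs[OF d H])
  qed
  have c1: "f (mat_adjoint x * b) \<in> carrier_mat n n" using lm_carrier[OF f] x b by simp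
  have c2: "mat_adjoint (f x) * f b \<in> carrier_mat n n" using fx fb by simp
  have "f (mat_adjoint x * b) - mat_adjoint (f x) * f b = 0\<^sub>m n n"
  proof (rule polarization)
    show "f (mat_adjoint x * b) - mat_adjoint (f x) * f b \<in> carrier_mat n n" using c2 by (rule minus_carrier_mat)
    fix v :: "complex vec" assume v: "v \<in> carrier_vec n"
    show "bf n (f (mat_adjoint x * b) - mat_adjoint (f x) * f b) v v = 0"
      using zero[OF v] unfolding Sv_def bf_minus_mat[OF c1 c2] .
  qed
  then show ?thesis by (rule minus_zero_eq[OF c1 c2])
qed

lemma minus_plus_cancel: "(A::complex mat) \<in> carrier_mat n n \<Longrightarrow> B \<in> carrier_mat n n \<Longrightarrow> (A - B) + B = A"
  by (rule eq_matI) simp_all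

lemma schw_comp: assumes f: "lin_map n f" and g: "lin_map n g" and Sf: "schw n f" and Sg: "schw n g"
  and pos: "\<And>X. psd n X \<Longrightarrow> psd n (f X)"
  shows "schw n (f \<circ> g)"
  unfolding schw_def
proof
  fix a :: "complex mat" assume a: "a \<in> carrier_mat n n"
  define b where "b = g a"
  have b: "b \<in> carrier_mat n n" unfolding b_def using lm_carrier[OF g a] .
  have gaa: "g (mat_adjoint a * a) \<in> carrier_mat n n" using lm_carrier[OF g] a by simp
  have bb: "mat_adjoint b * b \<in> carrier_mat n n" using b by simp
  define D where "D = g (mat_adjoint a * a) - mat_adjoint b * b"
  have D: "D \<in> carrier_mat n n" unfolding D_def using bb by (rule minus_carrier_mat)
  have pD: "psd n D" using Sg a unfolding schw_def D_def b_def by blast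
  have pfD: "psd n (f D)" using pos[OF pD] .
  have split: "g (mat_adjoint a * a) = D + mat_adjoint b * b"
    unfolding D_def using minus_plus_cancel[OF gaa bb] by simp
  have fsplit: "f (g (mat_adjoint a * a)) = f D + f (mat_adjoint b * b)"
    unfolding split using lm_add[OF f D bb] .
  have fD: "f D \<in> carrier_mat n n" using lm_carrier[OF f D] .
  have fbb: "f (mat_adjoint b * b) \<in> carrier_mat n n" using lm_carrier[OF f bb] .
  have fb: "f b \<in> carrier_mat n n" using lm_carrier[OF f b] .
  have fbfb: "mat_adjoint (f b) * f b \<in> carrier_mat n n" using fb by simp
  show "psd n ((f \<circ> g) (mat_adjoint a * a) - mat_adjoint ((f \<circ> g) a) * (f \<circ> g) a)"
  proof (rule psdI)
    show "(f \<circ> g) (mat_adjoint a * a) - mat_adjoint ((f \<circ> g) a) * (f \<circ> g) a \<in> carrier_mat n n"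
      unfolding comp_def b_def[symmetric] using fbfb by (rule minus_carrier_mat)
    fix v :: "complex vec" assume v: "v \<in> carrier_vec n"
    have "bf n ((f \<circ> g) (mat_adjoint a * a) - mat_adjoint ((f \<circ> g) a) * (f \<circ> g) a) v v
       = bf n (f D) v v + (bf n (f (mat_adjoint b * b)) v v - bf n (mat_adjoint (f b) * f b) v v)"
      unfolding comp_def b_def[symmetric] fsplit
      using fD fbb fbfb by (simp add: bf_minus_mat bf_add_mat)
    then show "Im (bf n ((f \<circ> g) (mat_adjoint a * a) - mat_adjoint ((f \<circ> g) a) * (f \<circ> g) a) v v) = 0 \<and>
      Re (bf n ((f \<circ> g) (mat_adjoint a * a) - mat_adjoint ((f \<circ> g) a) * (f \<circ> g) a) v v) \<ge> 0"
      using psd_bf[OF pfD v] schw_bf[OF f Sf b v] by simp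
  qed
qed

lemma schw_id: "schw n id"
  unfolding schw_def
proof
  fix a :: "complex mat" assume a: "a \<in> carrier_mat n n"
  have c: "mat_adjoint a * a \<in> carrier_mat n n" using a by simp
  show "psd n (id (mat_adjoint a * a) - mat_adjoint (id a) * id a)"
    by (rule psdI) (use c in \<open>simp_all add: bf_minus_mat minus_carrier_mat bf_zero_mat\<close>)
qed

lemma schw_pow: assumes f: "lin_map n f" and S: "schw n f" and pos: "\<And>X. psd n X \<Longrightarrow> psd n (f X)"
  shows "schw n (f ^^ k)"
proof (induction k)
  case 0 then show ?case by (simp only: funpow.simps(1) schw_id)
next
  case (Suc k)
  then show ?case using schw_comp[OF f lm_pow[OF f] S Suc pos] by (simp only: funpow.simps(2))
qed



lemma psd_f_adj: assumes f: "lin_map n f" and S: "schw n f" and Y: "Y \<in> carrier_mat n n"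
  shows "psd n (f (mat_adjoint Y * Y))"
proof (rule psdI)
  show "f (mat_adjoint Y * Y) \<in> carrier_mat n n" using lm_carrier[OF f] Y by simp
  fix v :: "complex vec" assume v: "v \<in> carrier_vec n"
  have fY: "f Y \<in> carrier_mat n n" using lm_carrier[OF f Y] .
  have p: "Im (bf n (mat_adjoint (f Y) * f Y) v v) = 0 \<and> Re (bf n (mat_adjoint (f Y) * f Y) v v) \<ge> 0"
    using psd_bf[OF psd_adj_mult[OF fY] v] .
  show "Im (bf n (f (mat_adjoint Y * Y)) v v) = 0 \<and> Re (bf n (f (mat_adjoint Y * Y)) v v) \<ge> 0"
    using schw_bf[OF f S Y v] p by simp
qed

definition rk1 :: "nat \<Rightarrow> complex vec \<Rightarrow> complex mat" where
  "rk1 n x = mat n n (\<lambda>(i,j). x $ i * cnj (x $ j))"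

lemma rk1_carrier[simp]: "rk1 n x \<in> carrier_mat n n"
  unfolding rk1_def by simp

lemma rk1_index[simp]: "i < n \<Longrightarrow> j < n \<Longrightarrow> rk1 n x $$ (i,j) = x $ i * cnj (x $ j)"
  unfolding rk1_def by simp

lemma rk1_adj_mult: assumes n: "0 < n"
  shows "\<exists>Y \<in> carrier_mat n n. rk1 n x = mat_adjoint Y * Y"
proof
  define Y where "Y = mat n n (\<lambda>(i,j). if i = 0 then cnj (x $ j) else 0)"
  show Y: "Y \<in> carrier_mat n n" unfolding Y_def by simp
  show "rk1 n x = mat_adjoint Y * Y"
  proof (rule eq_matI)
    fix i j assume "i < dim_row (mat_adjoint Y * Y)" "j < dim_col (mat_adjoint Y * Y)"
    then have i: "i < n" and j: "j < n" using Y by auto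
    have "(mat_adjoint Y * Y) $$ (i,j) = (\<Sum>l<n. mat_adjoint Y $$ (i,l) * Y $$ (l,j))"
      by (rule mm_index) (use Y i j in simp_all)
    also have "\<dots> = (\<Sum>l<n. if l = 0 then x $ i * cnj (x $ j) else 0)"
      by (rule sum.cong) (use Y i j in \<open>simp_all add: Y_def\<close>)
    also have "\<dots> = x $ i * cnj (x $ j)" using n by (simp add: sum.delta)
    finally show "rk1 n x $$ (i,j) = (mat_adjoint Y * Y) $$ (i,j)" using i j by simp
  qed (use Y in \<open>simp_all add: rk1_def\<close>)
qed

lemma bf_rk1: "bf n (rk1 n x) v v = (\<Sum>i<n. cnj (v $ i) * x $ i) * (\<Sum>j<n. cnj (x $ j) * v $ j)"
proof -
  have "bf n (rk1 n x) v v = (\<Sum>i<n. \<Sum>j<n. (cnj (v $ i) * x $ i) * (cnj (x $ j) * v $ j))"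
    unfolding bf_def by (rule sum2_cong) (simp add: mult.assoc)
  then show ?thesis by (simp add: sum_product)
qed

lemma bf_unit_r: "X \<in> carrier_mat n n \<Longrightarrow> k < n \<Longrightarrow> bf n X v (unit_vec n k) = (\<Sum>i<n. cnj (v $ i) * X $$ (i,k))"
proof -
  assume k: "k < n"
  have "bf n X v (unit_vec n k) = (\<Sum>i<n. \<Sum>j<n. if j = k then cnj (v $ i) * X $$ (i,k) else 0)"
    unfolding bf_def by (rule sum2_cong) (use k in simp)
  then show ?thesis using k by (simp add: sum.delta)
qed

lemma bf_unit_l: "X \<in> carrier_mat n n \<Longrightarrow> k < n \<Longrightarrow> bf n X (unit_vec n k) v = (\<Sum>j<n. X $$ (k,j) * v $ j)"
proof -
  assume k: "k < n"
  have "bf n X (unit_vec n k) v = (\<Sum>i<n. if i = k then (\<Sum>j<n. X $$ (k,j) * v $ j) else 0)"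
    unfolding bf_def
  proof (rule sum.cong[OF refl])
    fix i assume "i \<in> {..<n}" then have i: "i < n" by simp
    show "(\<Sum>j<n. cnj (unit_vec n k $ i) * X $$ (i, j) * v $ j) = (if i = k then \<Sum>j<n. X $$ (k, j) * v $ j else 0)"
      using i k by simp
  qed
  then show ?thesis using k by (simp add: sum.delta)
qed

lemma psd_degenerate: assumes X: "psd n X" and k: "k < n" and j: "j < n" and z: "X $$ (k,k) = 0"
  shows "X $$ (j,k) = 0"
proof -
  have Xc: "X \<in> carrier_mat n n" using psd_carrier[OF X] .
  let ?ek = "unit_vec n k :: complex vec" and ?ej = "unit_vec n j :: complex vec"
  have ck: "?ek \<in> carrier_vec n" and cj: "?ej \<in> carrier_vec n" by simp_all
  have d: "Im (X $$ (j,j)) = 0" "Re (X $$ (j,j)) \<ge> 0" using psd_bf[OF X cj] bf_unit[OF j j] by simp_all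
  have H: "Im (t * X $$ (k,j) + cnj t * X $$ (j,k) + cnj t * t * X $$ (j,j)) = 0 \<and>
           Re (t * X $$ (k,j) + cnj t * X $$ (j,k) + cnj t * t * X $$ (j,j)) \<ge> 0" for t
  proof -
    have ctj: "t \<cdot>\<^sub>v ?ej \<in> carrier_vec n" by simp
    have "bf n X (?ek + t \<cdot>\<^sub>v ?ej) (?ek + t \<cdot>\<^sub>v ?ej) = t * X $$ (k,j) + cnj t * X $$ (j,k) + cnj t * t * X $$ (j,j)"
      using ck cj ctj k j z by (simp add: bf_add_l bf_add_r bf_smult_l bf_smult_r bf_unit algebra_simps)
    moreover have "?ek + t \<cdot>\<^sub>v ?ej \<in> carrier_vec n" using ck ctj by simp
    ultimately show ?thesis using psd_bf[OF X] by metis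
  qed
  show ?thesis by (rule scalar_cs[OF d H])
qed



lemma rk1_dims[simp]: "dim_row (rk1 n x) = n" "dim_col (rk1 n x) = n"
  unfolding rk1_def by simp_all

lemma positivity: assumes f: "lin_map n f" and S: "schw n f" and PX: "psd n X"
  shows "psd n (f X)"
proof -
  have main: "m \<le> n \<Longrightarrow> (\<forall>X. psd n X \<and> (\<forall>i<n. \<forall>j<n. (i < n - m \<or> j < n - m) \<longrightarrow> X $$ (i,j) = 0) \<longrightarrow> psd n (f X))" for m
  proof (induction m)
    case 0
    show ?case
    proof (intro allI impI)
      fix X assume A: "psd n X \<and> (\<forall>i<n. \<forall>j<n. (i < n - 0 \<or> j < n - 0) \<longrightarrow> X $$ (i,j) = 0)"
      have Xc: "X \<in> carrier_mat n n" using A psd_carrier by blast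
      have "X = 0\<^sub>m n n"
      proof (rule eq_matI)
        fix i j assume "i < dim_row (0\<^sub>m n n :: complex mat)" "j < dim_col (0\<^sub>m n n :: complex mat)"
        then have i: "i < n" and j: "j < n" by simp_all
        then show "X $$ (i,j) = 0\<^sub>m n n $$ (i,j)" using A by simp
      qed (use Xc in simp_all)
      then show "psd n (f X)" using lm_zero[OF f] psd_zero by simp
    qed
  next
    case (Suc m)
    then have mn: "m < n" by simp
    have IH: "\<forall>X. psd n X \<and> (\<forall>i<n. \<forall>j<n. (i < n - m \<or> j < n - m) \<longrightarrow> X $$ (i,j) = 0) \<longrightarrow> psd n (f X)"
      using Suc by simp
    define k where "k = n - Suc m"
    have k: "k < n" and nm: "n - m = Suc k" unfolding k_def using mn by simp_all
    show ?case
    proof (intro allI impI)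
      fix X assume A: "psd n X \<and> (\<forall>i<n. \<forall>j<n. (i < n - Suc m \<or> j < n - Suc m) \<longrightarrow> X $$ (i,j) = 0)"
      then have X: "psd n X" by simp
      have Z: "X $$ (i,j) = 0" if "i < n" "j < n" "i < k \<or> j < k" for i j
        using A that unfolding k_def by blast
      have Xc: "X \<in> carrier_mat n n" using psd_carrier[OF X] .
      have herm: "X $$ (i,j) = cnj (X $$ (j,i))" if "i < n" "j < n" for i j
        using psd_herm_entry[OF X that] .
      show "psd n (f X)"
      proof (cases "X $$ (k,k) = 0")
        case True
        have "X $$ (i,j) = 0" if i: "i < n" and j: "j < n" and ij: "i < n - m \<or> j < n - m" for i j
        proof -
          have "i < k \<or> j < k \<or> i = k \<or> j = k" using ij nm by auto
          then show ?thesis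
          proof (elim disjE)
            assume "i < k" then show ?thesis using Z i j by blast
          next
            assume "j < k" then show ?thesis using Z i j by blast
          next
            assume ik: "i = k"
            have "X $$ (j,k) = 0" using psd_degenerate[OF X k j True] .
            then show ?thesis using herm[OF i j] ik by simp
          next
            assume jk: "j = k"
            show ?thesis using psd_degenerate[OF X k i True] jk by simp
          qed
        qed
        then show ?thesis using IH X by blast
      next
        case False
        define r where "r = Re (X $$ (k,k))"
        have ek: "unit_vec n k \<in> carrier_vec n" by simp
        have pk: "Im (X $$ (k,k)) = 0" "Re (X $$ (k,k)) \<ge> 0"
          using psd_bf[OF X ek] bf_unit[OF k k] by simp_all
        have kk: "X $$ (k,k) = complex_of_real r" unfolding r_def using pk by (simp add: complex_eq_iff)
        have r0: "r \<noteq> 0" using False kk by auto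
        have r: "r > 0" using pk r0 unfolding r_def by simp
        define x where "x = col X k"
        have xc: "x \<in> carrier_vec n" unfolding x_def using Xc k by simp
        have xi: "x $ i = X $$ (i,k)" if "i < n" for i unfolding x_def using Xc k that by simp
        define R where "R = complex_of_real (1/r) \<cdot>\<^sub>m rk1 n x"
        have Rc: "R \<in> carrier_mat n n" unfolding R_def by simp
        have Ri: "R $$ (i,j) = X $$ (i,k) * X $$ (k,j) / complex_of_real r" if i: "i < n" and j: "j < n" for i j
          unfolding R_def using i j xi herm[OF k j] by (simp add: field_simps)
        define X' where "X' = X - R"
        have X'c: "X' \<in> carrier_mat n n" unfolding X'_def using Rc by (rule minus_carrier_mat)
        have X'i: "X' $$ (i,j) = X $$ (i,j) - X $$ (i,k) * X $$ (k,j) / complex_of_real r" if i: "i < n" and j: "j < n" for i j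
          unfolding X'_def using i j Xc Rc Ri by simp
        have X'Z: "X' $$ (i,j) = 0" if i: "i < n" and j: "j < n" and ij: "i < n - m \<or> j < n - m" for i j
        proof -
          have "i < k \<or> j < k \<or> i = k \<or> j = k" using ij nm by auto
          then show ?thesis
          proof (elim disjE)
            assume "i < k" then show ?thesis using Z i j k X'i by simp
          next
            assume "j < k" then show ?thesis using Z i j k X'i by simp
          next
            assume ik: "i = k" then show ?thesis using X'i[OF i j] kk r0 by simp
          next
            assume jk: "j = k" then show ?thesis using X'i[OF i j] kk r0 by simp
          qed
        qed
        have pX': "psd n X'"
        proof (rule psdI[OF X'c])
          fix v :: "complex vec" assume v: "v \<in> carrier_vec n"
          define s where "s = bf n X (unit_vec n k) v"
          have s1: "bf n X v (unit_vec n k) = cnj s"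
            unfolding s_def using bf_adj[OF Xc, of v "unit_vec n k"] psd_hermitian[OF X] by simp
          have sa: "(\<Sum>i<n. cnj (v $ i) * x $ i) = cnj s"
            unfolding s1[symmetric] bf_unit_r[OF Xc k] by (rule sum.cong) (simp_all add: xi)
          have sb: "(\<Sum>j<n. cnj (x $ j) * v $ j) = s"
            unfolding s_def bf_unit_l[OF Xc k] by (rule sum.cong) (simp_all add: xi herm[OF k])
          have bR: "bf n (rk1 n x) v v = cnj s * s" unfolding bf_rk1 sa sb ..
          have b1: "bf n X' v v = bf n X v v - complex_of_real (1/r) * (cnj s * s)"
            using bf_minus_mat[OF Xc Rc, of v v] bf_smult_mat[OF rk1_carrier, of n "complex_of_real (1/r)" x v v] bR
            unfolding X'_def R_def by simp
          define t where "t = s / complex_of_real r"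
          define w where "w = v + (-t) \<cdot>\<^sub>v unit_vec n k"
          have tk: "(-t) \<cdot>\<^sub>v unit_vec n k \<in> carrier_vec n" by simp
          have wc: "w \<in> carrier_vec n" unfolding w_def by (rule add_carrier_vec[OF v tk])
          have "bf n X w w = bf n X v v + (-t) * bf n X v (unit_vec n k) + cnj (-t) * bf n X (unit_vec n k) v
                + cnj (-t) * ((-t) * X $$ (k,k))"
            unfolding w_def using v tk ek
            by (simp add: bf_add_l bf_add_r bf_smult_l bf_smult_r bf_unit[OF k k] algebra_simps)
          also have "\<dots> = bf n X' v v"
            unfolding b1 s1 kk s_def[symmetric] t_def using r0 by (simp add: field_simps)
          finally have "bf n X' v v = bf n X w w" by simp
          then show "Im (bf n X' v v) = 0 \<and> Re (bf n X' v v) \<ge> 0" using psd_bf[OF X wc] by simp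
        qed
        have pfX': "psd n (f X')" using IH X'Z pX' by blast
        obtain Y where Y: "Y \<in> carrier_mat n n" and rY: "rk1 n x = mat_adjoint Y * Y"
          using rk1_adj_mult[of n x] k by auto
        have "f R = complex_of_real (1/r) \<cdot>\<^sub>m f (rk1 n x)" unfolding R_def by (rule lm_smult[OF f rk1_carrier])
        then have pfR: "psd n (f R)" using psd_smult[OF psd_f_adj[OF f S Y], of "1/r"] rY r by simp
        have "X = X' + R" unfolding X'_def using minus_plus_cancel[OF Xc Rc] by simp
        then have "f X = f X' + f R" using lm_add[OF f X'c Rc] by simp
        then show ?thesis using psd_add[OF pfX' pfR] by simp
      qed
    qed
  qed
  show ?thesis using main[of n] PX by simp
qed



lemma pd_bf: "pd n A \<Longrightarrow> v \<in> carrier_vec n \<Longrightarrow> v \<noteq> 0\<^sub>v n \<Longrightarrow> Re (bf n A v v) > 0"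
  unfolding pd_def using quad_bf by metis

lemma pd_carrier: "pd n A \<Longrightarrow> A \<in> carrier_mat n n"
  unfolding pd_def by simp

lemma pd_zero_false: assumes "0 < n" shows "\<not> pd n (0\<^sub>m n n)"
proof
  assume p: "pd n (0\<^sub>m n n)"
  have "unit_vec n 0 \<noteq> (0\<^sub>v n :: complex vec)"
  proof
    assume "unit_vec n 0 = (0\<^sub>v n :: complex vec)"
    then have "unit_vec n 0 $ 0 = (0\<^sub>v n :: complex vec) $ 0" by simp
    then show False using assms by simp
  qed
  from pd_bf[OF p _ this] show False by (simp add: bf_zero_mat)
qed

lemma pd_adj_inj: assumes p: "pd n A" and u: "u \<in> carrier_vec n" and z: "mat_adjoint A *\<^sub>v u = 0\<^sub>v n"
  shows "u = 0\<^sub>v n"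
proof (rule ccontr)
  assume nz: "u \<noteq> 0\<^sub>v n"
  have A: "A \<in> carrier_mat n n" using pd_carrier[OF p] .
  have "bf n (mat_adjoint A) u u = (\<Sum>i<n. cnj (u$i) * (mat_adjoint A *\<^sub>v u)$i)"
    by (rule bf_mv) (use A u in simp_all)
  also have "\<dots> = 0" unfolding z by simp
  finally have "cnj (bf n A u u) = 0" using bf_adj[OF A] by simp
  then have "bf n A u u = 0" by simp
  then show False using pd_bf[OF p u nz] by simp
qed

lemma rk1_psd: assumes "0 < n" shows "psd n (rk1 n x)"
proof -
  obtain Y where "Y \<in> carrier_mat n n" "rk1 n x = mat_adjoint Y * Y" using rk1_adj_mult[OF assms] by blast
  then show ?thesis using psd_adj_mult by simp
qed

lemma rk1_adj: "mat_adjoint (rk1 n x) = rk1 n x"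
  by (rule eq_matI) (simp_all add: rk1_def)

lemma rk1_nonzero: assumes x: "x \<in> carrier_vec n" and nz: "x \<noteq> 0\<^sub>v n" shows "rk1 n x \<noteq> 0\<^sub>m n n"
proof
  assume z: "rk1 n x = 0\<^sub>m n n"
  have "x = 0\<^sub>v n"
  proof (rule eq_vecI)
    fix i assume "i < dim_vec (0\<^sub>v n :: complex vec)" then have i: "i < n" by simp
    have "rk1 n x $$ (i,i) = 0" using z i by simp
    then have "x $ i * cnj (x $ i) = 0" using i by simp
    then show "x $ i = 0\<^sub>v n $ i" using i by simp
  qed (use x in simp)
  then show False using nz by simp
qed

lemma rk1_mult_zero: assumes c: "c \<in> carrier_mat n n" and x: "x \<in> carrier_vec n"
  and z: "mat_adjoint c *\<^sub>v x = 0\<^sub>v n"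
  shows "rk1 n x * c = 0\<^sub>m n n"
proof (rule eq_matI)
  fix i j assume "i < dim_row (0\<^sub>m n n :: complex mat)" "j < dim_col (0\<^sub>m n n :: complex mat)"
  then have i: "i < n" and j: "j < n" by simp_all
  have "(mat_adjoint c *\<^sub>v x) $ j = (\<Sum>l<n. mat_adjoint c $$ (j,l) * x $ l)"
    by (rule mv_index) (use c x j in simp_all)
  also have "\<dots> = (\<Sum>l<n. cnj (c $$ (l,j)) * x $ l)"
    by (rule sum.cong) (use c j in simp_all)
  finally have "(\<Sum>l<n. cnj (c $$ (l,j)) * x $ l) = 0" using z j by simp
  then have "cnj (\<Sum>l<n. cnj (c $$ (l,j)) * x $ l) = 0" by simp
  then have s0: "(\<Sum>l<n. cnj (x $ l) * c $$ (l,j)) = 0" by (simp add: mult.commute)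
  have "(rk1 n x * c) $$ (i,j) = (\<Sum>l<n. rk1 n x $$ (i,l) * c $$ (l,j))"
    by (rule mm_index) (use c i j in simp_all)
  also have "\<dots> = (\<Sum>l<n. x $ i * (cnj (x $ l) * c $$ (l,j)))"
    by (rule sum.cong) (use i in simp_all)
  also have "\<dots> = x $ i * (\<Sum>l<n. cnj (x $ l) * c $$ (l,j))" by (simp add: sum_distrib_left)
  also have "\<dots> = 0" using s0 by simp
  finally show "(rk1 n x * c) $$ (i,j) = 0\<^sub>m n n $$ (i,j)" using i j by simp
qed (use c in simp_all)

lemma re_cnj_sq: "Re (cnj z * z) = (cmod z)\<^sup>2"
  unfolding cmod_power2 by (simp add: power2_eq_square)

lemma adj_nonzero: assumes c: "(c::complex mat) \<in> carrier_mat n n" and nz: "c \<noteq> 0\<^sub>m n n"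
  shows "mat_adjoint c * c \<noteq> 0\<^sub>m n n"
proof
  assume z: "mat_adjoint c * c = 0\<^sub>m n n"
  have "c = 0\<^sub>m n n"
  proof (rule eq_matI)
    fix i j assume "i < dim_row (0\<^sub>m n n :: complex mat)" "j < dim_col (0\<^sub>m n n :: complex mat)"
    then have i: "i < n" and j: "j < n" by simp_all
    have ej: "unit_vec n j \<in> carrier_vec n" by simp
    have "bf n (mat_adjoint c * c) (unit_vec n j) (unit_vec n j) = (\<Sum>l<n. cnj ((c *\<^sub>v unit_vec n j)$l) * (c *\<^sub>v unit_vec n j)$l)"
      by (rule bf_adj_mult[OF c c ej ej])
    moreover have "bf n (mat_adjoint c * c) (unit_vec n j) (unit_vec n j) = 0" unfolding z by (simp add: bf_zero_mat)
    ultimately have S0: "(\<Sum>l<n. cnj ((c *\<^sub>v unit_vec n j)$l) * (c *\<^sub>v unit_vec n j)$l) = 0" by simp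
    have "Re (\<Sum>l<n. cnj ((c *\<^sub>v unit_vec n j)$l) * (c *\<^sub>v unit_vec n j)$l) = (\<Sum>l<n. (cmod ((c *\<^sub>v unit_vec n j)$l))\<^sup>2)"
      unfolding Re_sum by (rule sum.cong) (simp_all only: re_cnj_sq)
    then have "(\<Sum>l<n. (cmod ((c *\<^sub>v unit_vec n j)$l))\<^sup>2) = 0" using S0 by simp
    then have "(cmod ((c *\<^sub>v unit_vec n j)$i))\<^sup>2 = 0"
      using sum_nonneg_eq_0_iff[of "{..<n}" "\<lambda>l. (cmod ((c *\<^sub>v unit_vec n j)$l))\<^sup>2"] i by simp
    then have "(c *\<^sub>v unit_vec n j)$i = 0" by simp
    moreover have "(c *\<^sub>v unit_vec n j)$i = c $$ (i,j)"
    proof -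
      have "(c *\<^sub>v unit_vec n j)$i = (\<Sum>l<n. c$$(i,l) * unit_vec n j $ l)" by (rule mv_index) (use c i j in simp_all)
      also have "\<dots> = (\<Sum>l<n. if l = j then c$$(i,j) else 0)" by (rule sum.cong) (use j in simp_all)
      also have "\<dots> = c$$(i,j)" using j by (simp add: sum.delta)
      finally show ?thesis .
    qed
    ultimately show "c $$ (i,j) = 0\<^sub>m n n $$ (i,j)" using i j by simp
  qed (use c in simp_all)
  then show False using nz by simp
qed



lemma lin_comb_choi: assumes f: "lin_map n f" and b1: "b1 \<in> carrier_mat n n" and b2: "b2 \<in> carrier_mat n n"
  and H1: "\<And>x. x \<in> carrier_mat n n \<Longrightarrow> f (mat_adjoint x * b1) = mat_adjoint (f x) * f b1"
  and H2: "\<And>x. x \<in> carrier_mat n n \<Longrightarrow> f (mat_adjoint x * b2) = mat_adjoint (f x) * f b2"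
  and x: "x \<in> carrier_mat n n"
  shows "f (mat_adjoint x * (b1 + k \<cdot>\<^sub>m b2)) = mat_adjoint (f x) * f (b1 + k \<cdot>\<^sub>m b2)"
proof -
  have ax: "mat_adjoint x \<in> carrier_mat n n" using x by simp
  have kb2: "k \<cdot>\<^sub>m b2 \<in> carrier_mat n n" using b2 by simp
  have fx: "mat_adjoint (f x) \<in> carrier_mat n n" using lm_carrier[OF f x] by simp
  have fb1: "f b1 \<in> carrier_mat n n" and fb2: "f b2 \<in> carrier_mat n n" using lm_carrier[OF f] b1 b2 by auto
  have kfb2: "k \<cdot>\<^sub>m f b2 \<in> carrier_mat n n" using fb2 by simp
  have "mat_adjoint x * (b1 + k \<cdot>\<^sub>m b2) = mat_adjoint x * b1 + k \<cdot>\<^sub>m (mat_adjoint x * b2)"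
    using mult_add_distrib_mat[OF ax b1 kb2] mult_smult_distrib[OF ax b2] by simp
  then have "f (mat_adjoint x * (b1 + k \<cdot>\<^sub>m b2)) = f (mat_adjoint x * b1) + k \<cdot>\<^sub>m f (mat_adjoint x * b2)"
    using lm_add[OF f] lm_smult[OF f] ax b1 b2 by simp
  also have "\<dots> = mat_adjoint (f x) * f b1 + k \<cdot>\<^sub>m (mat_adjoint (f x) * f b2)" using H1[OF x] H2[OF x] by simp
  also have "\<dots> = mat_adjoint (f x) * (f b1 + k \<cdot>\<^sub>m f b2)"
    using mult_add_distrib_mat[OF fx fb1 kfb2] mult_smult_distrib[OF fx fb2] by simp
  also have "f b1 + k \<cdot>\<^sub>m f b2 = f (b1 + k \<cdot>\<^sub>m b2)" using lm_add[OF f b1 kb2] lm_smult[OF f b2] by simp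
  finally show ?thesis .
qed

lemma scalar_of_md:
  assumes f: "lin_map n f" and S: "schw n f" and u: "f (1\<^sub>m n) = 1\<^sub>m n"
    and prim: "\<And>P. psd n P \<Longrightarrow> P \<noteq> 0\<^sub>m n n \<Longrightarrow> pd n (f P)"
    and n: "0 < n" and a: "a \<in> mult_domain n f"
  shows "\<exists>c. a = c \<cdot>\<^sub>m 1\<^sub>m n"
proof -
  have ac: "a \<in> carrier_mat n n" and eqa: "f (mat_adjoint a * a) = mat_adjoint (f a) * f a"
    using a unfolding mult_domain_def by auto
  have HA: "f (mat_adjoint x * a) = mat_adjoint (f x) * f a" if "x \<in> carrier_mat n n" for x
    by (rule choi[OF f S ac eqa that])
  have one: "mat_adjoint (1\<^sub>m n) * 1\<^sub>m n = (1\<^sub>m n :: complex mat)" by (simp add: adj_one)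
  have eq1: "f (mat_adjoint (1\<^sub>m n) * 1\<^sub>m n) = mat_adjoint (f (1\<^sub>m n)) * f (1\<^sub>m n)"
    unfolding u one by (simp add: adj_one)
  have HI: "f (mat_adjoint x * 1\<^sub>m n) = mat_adjoint (f x) * f (1\<^sub>m n)" if "x \<in> carrier_mat n n" for x
    by (rule choi[OF f S one_carrier_mat eq1 that])
  have aa: "mat_adjoint a \<in> carrier_mat n n" using ac by simp
  from spectrum_non_empty[OF aa n] obtain \<mu> where "\<mu> \<in> spectrum (mat_adjoint a)" by blast
  then obtain v where v: "v \<in> carrier_vec n" and vnz: "v \<noteq> 0\<^sub>v n" and ev: "mat_adjoint a *\<^sub>v v = \<mu> \<cdot>\<^sub>v v"
    unfolding spectrum_def eigenvalue_def eigenvector_def using ac by auto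
  define c where "c = a + (- cnj \<mu>) \<cdot>\<^sub>m 1\<^sub>m n"
  have cc: "c \<in> carrier_mat n n" unfolding c_def by simp
  have Hc: "f (mat_adjoint x * c) = mat_adjoint (f x) * f c" if x: "x \<in> carrier_mat n n" for x
    unfolding c_def by (rule lin_comb_choi[OF f ac one_carrier_mat HA HI x])
  have cv: "mat_adjoint c *\<^sub>v v = 0\<^sub>v n"
  proof (rule eq_vecI)
    fix i assume "i < dim_vec (0\<^sub>v n :: complex vec)" then have i: "i < n" by simp
    have "(mat_adjoint c *\<^sub>v v) $ i = (\<Sum>l<n. mat_adjoint c $$ (i,l) * v $ l)"
      by (rule mv_index) (use cc v i in simp_all)
    also have "\<dots> = (\<Sum>l<n. mat_adjoint a $$ (i,l) * v $ l + (if l = i then - \<mu> * v $ i else 0))"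
      by (rule sum.cong) (use ac i in \<open>simp_all add: c_def algebra_simps\<close>)
    also have "\<dots> = (\<Sum>l<n. mat_adjoint a $$ (i,l) * v $ l) - \<mu> * v $ i"
      using i by (simp add: sum.distrib sum.delta)
    also have "(\<Sum>l<n. mat_adjoint a $$ (i,l) * v $ l) = (mat_adjoint a *\<^sub>v v) $ i"
      by (rule mv_index[symmetric]) (use aa v i in simp_all)
    also have "\<dots> = \<mu> * v $ i" unfolding ev using v i by simp
    finally show "(mat_adjoint c *\<^sub>v v) $ i = 0\<^sub>v n $ i" using i by simp
  qed (use cc in simp)
  define P where "P = rk1 n v"
  have Pc: "P \<in> carrier_mat n n" unfolding P_def by simp
  have pP: "psd n P" unfolding P_def using rk1_psd[OF n] .
  have nzP: "P \<noteq> 0\<^sub>m n n" unfolding P_def using rk1_nonzero[OF v vnz] .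
  have pdP: "pd n (f P)" using prim[OF pP nzP] .
  have fPc: "f P \<in> carrier_mat n n" using lm_carrier[OF f Pc] .
  have fcc: "f c \<in> carrier_mat n n" using lm_carrier[OF f cc] .
  have "f (mat_adjoint P * c) = mat_adjoint (f P) * f c" using Hc[OF Pc] .
  moreover have "mat_adjoint P * c = 0\<^sub>m n n" unfolding P_def rk1_adj using rk1_mult_zero[OF cc v cv] .
  ultimately have Z: "mat_adjoint (f P) * f c = 0\<^sub>m n n" using lm_zero[OF f] by simp
  have fc0: "f c = 0\<^sub>m n n"
  proof (rule eq_matI)
    fix i j assume "i < dim_row (0\<^sub>m n n :: complex mat)" "j < dim_col (0\<^sub>m n n :: complex mat)"
    then have i: "i < n" and j: "j < n" by simp_all
    have afP: "mat_adjoint (f P) \<in> carrier_mat n n" using fPc by simp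
    have colc: "col (f c) j \<in> carrier_vec n" using col_dim[of "f c" j] fcc by (simp add: carrier_matD)
    have "mat_adjoint (f P) *\<^sub>v col (f c) j = col (mat_adjoint (f P) * f c) j"
      using col_mult2[OF afP fcc j] by simp
    also have "\<dots> = 0\<^sub>v n" unfolding Z using j by simp
    finally have "col (f c) j = 0\<^sub>v n" using pd_adj_inj[OF pdP colc] by simp
    then have "col (f c) j $ i = 0" using i by simp
    then show "f c $$ (i,j) = 0\<^sub>m n n $$ (i,j)" using fcc i j by simp
  qed (use fcc in simp_all)
  have "f (mat_adjoint c * c) = mat_adjoint (f c) * f c" using Hc[OF cc] .
  also have "\<dots> = 0\<^sub>m n n" unfolding fc0 by (rule eq_matI) simp_all
  finally have fcc0: "f (mat_adjoint c * c) = 0\<^sub>m n n" .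
  have c0: "c = 0\<^sub>m n n"
  proof (rule ccontr)
    assume "c \<noteq> 0\<^sub>m n n"
    then have "mat_adjoint c * c \<noteq> 0\<^sub>m n n" using adj_nonzero[OF cc] by simp
    then have "pd n (f (mat_adjoint c * c))" using prim[OF psd_adj_mult[OF cc]] by simp
    then show False using fcc0 pd_zero_false[OF n] by simp
  qed
  have "a = cnj \<mu> \<cdot>\<^sub>m 1\<^sub>m n"
  proof (rule eq_matI)
    fix i j assume "i < dim_row (cnj \<mu> \<cdot>\<^sub>m 1\<^sub>m n)" "j < dim_col (cnj \<mu> \<cdot>\<^sub>m 1\<^sub>m n)"
    then have i: "i < n" and j: "j < n" by simp_all
    have "c $$ (i,j) = 0" using c0 i j by simp
    then show "a $$ (i,j) = (cnj \<mu> \<cdot>\<^sub>m 1\<^sub>m n) $$ (i,j)" unfolding c_def using ac i j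
      by (cases "i = j") simp_all
  qed (use ac in simp_all)
  then show ?thesis by blast
qed



lemma pow_unital: fixes f :: "complex mat \<Rightarrow> complex mat"
  assumes u: "f (1\<^sub>m n) = 1\<^sub>m n" shows "(f ^^ k) (1\<^sub>m n) = 1\<^sub>m n"
proof (induction k)
  case 0 show ?case by simp
next
  case (Suc k) then show ?case using u by simp
qed

lemma scalar_in_md: assumes g: "lin_map n g" and u: "g (1\<^sub>m n) = 1\<^sub>m n"
  shows "c \<cdot>\<^sub>m 1\<^sub>m n \<in> mult_domain n g"
proof -
  have o: "(1\<^sub>m n :: complex mat) \<in> carrier_mat n n" by simp
  have c1: "c \<cdot>\<^sub>m 1\<^sub>m n \<in> carrier_mat n n" by simp
  have gc: "g (c \<cdot>\<^sub>m 1\<^sub>m n) = c \<cdot>\<^sub>m 1\<^sub>m n" using lm_smult[OF g o] u by simp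
  have adj: "mat_adjoint (c \<cdot>\<^sub>m 1\<^sub>m n) = cnj c \<cdot>\<^sub>m 1\<^sub>m n" by (simp add: adj_smult adj_one)
  have pr: "(x \<cdot>\<^sub>m 1\<^sub>m n) * (y \<cdot>\<^sub>m 1\<^sub>m n) = x \<cdot>\<^sub>m (y \<cdot>\<^sub>m (1\<^sub>m n :: complex mat))" for x y
  proof -
    have "(x \<cdot>\<^sub>m 1\<^sub>m n) * (y \<cdot>\<^sub>m 1\<^sub>m n) = x \<cdot>\<^sub>m (1\<^sub>m n * (y \<cdot>\<^sub>m (1\<^sub>m n :: complex mat)))"
      by (rule mult_smult_assoc_mat[OF o smult_carrier_mat[OF o]])
    also have "1\<^sub>m n * (y \<cdot>\<^sub>m (1\<^sub>m n :: complex mat)) = y \<cdot>\<^sub>m 1\<^sub>m n" by (rule left_mult_one_mat[OF smult_carrier_mat[OF o]])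
    finally show ?thesis .
  qed
  have gxy: "g (x \<cdot>\<^sub>m (y \<cdot>\<^sub>m 1\<^sub>m n)) = x \<cdot>\<^sub>m (y \<cdot>\<^sub>m 1\<^sub>m n)" for x y
    using lm_smult[OF g] u o by simp
  show ?thesis unfolding mult_domain_def
    using c1 by (simp add: gc adj pr gxy)
qed

lemma small_scalar: assumes n: "n \<le> 1" and a: "(a::complex mat) \<in> carrier_mat n n"
  shows "a = a $$ (0,0) \<cdot>\<^sub>m 1\<^sub>m n"
proof (rule eq_matI)
  fix i j assume "i < dim_row (a $$ (0,0) \<cdot>\<^sub>m 1\<^sub>m n)" "j < dim_col (a $$ (0,0) \<cdot>\<^sub>m (1\<^sub>m n :: complex mat))"
  then have "i < n" "j < n" by simp_all
  then have "i = 0" "j = 0" using n by simp_all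
  then show "a $$ (i,j) = (a $$ (0,0) \<cdot>\<^sub>m 1\<^sub>m n) $$ (i,j)" using \<open>i < n\<close> by simp
qed (use a in simp_all)

lemma prim0_false: assumes n: "2 \<le> n" and H: "\<And>P. psd n P \<Longrightarrow> P \<noteq> 0\<^sub>m n n \<Longrightarrow> pd n P"
  shows False
proof -
  let ?e0 = "unit_vec n 0 :: complex vec" and ?e1 = "unit_vec n 1 :: complex vec"
  have e0: "?e0 \<in> carrier_vec n" by simp
  have nz0: "?e0 \<noteq> 0\<^sub>v n"
  proof
    assume "?e0 = 0\<^sub>v n"
    then have "?e0 $ 0 = (0\<^sub>v n :: complex vec) $ 0" by simp
    then show False using n by simp
  qed
  have nz1: "?e1 \<noteq> 0\<^sub>v n"
  proof
    assume "?e1 = 0\<^sub>v n"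
    then have "?e1 $ 1 = (0\<^sub>v n :: complex vec) $ 1" by simp
    then show False using n by simp
  qed
  have p: "pd n (rk1 n ?e0)" using H[OF rk1_psd rk1_nonzero[OF e0 nz0]] n by simp
  have "Re (bf n (rk1 n ?e0) ?e1 ?e1) > 0" using pd_bf[OF p _ nz1] by simp
  moreover have "bf n (rk1 n ?e0) ?e1 ?e1 = 0" using n by (simp add: bf_unit)
  ultimately show False by simp
qed

theorem lemma3p3:
  fixes D :: nat and \<phi> :: "complex mat \<Rightarrow> complex mat"
  assumes "unital_schwarz D \<phi>" and "primitive D \<phi>"
  shows "mult_domain_inf D \<phi> = mult_domain_inter D \<phi> \<and>
         mult_domain_inter D \<phi> = {c \<cdot>\<^sub>m 1\<^sub>m D | c :: complex. True}"
proof -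
  have lin: "lin_map D \<phi>" and u: "\<phi> (1\<^sub>m D) = 1\<^sub>m D" and S: "schw D \<phi>"
    using assms(1) unfolding unital_schwarz_def schw_def by auto
  have pos: "\<And>X. psd D X \<Longrightarrow> psd D (\<phi> X)" using positivity[OF lin S] by blast
  obtain N where prim: "\<And>P. psd D P \<Longrightarrow> P \<noteq> 0\<^sub>m D D \<Longrightarrow> pd D ((\<phi> ^^ N) P)"
    using assms(2) unfolding primitive_def by blast
  define Sc where "Sc = {c \<cdot>\<^sub>m 1\<^sub>m D | c :: complex. True}"
  have sub: "Sc \<subseteq> mult_domain D (\<phi> ^^ k)" for k
    unfolding Sc_def using scalar_in_md[OF lm_pow[OF lin] pow_unital[of \<phi> D, OF u]] by blast
  have K: "\<exists>k. 1 \<le> k \<and> mult_domain D (\<phi> ^^ k) \<subseteq> Sc"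
  proof (cases "D \<le> 1")
    case True
    have "mult_domain D (\<phi> ^^ 1) \<subseteq> Sc"
    proof
      fix a assume "a \<in> mult_domain D (\<phi> ^^ 1)"
      then have "a \<in> carrier_mat D D" unfolding mult_domain_def by simp
      then show "a \<in> Sc" unfolding Sc_def using small_scalar[OF True] by blast
    qed
    then show ?thesis by blast
  next
    case False
    have N: "N \<noteq> 0"
    proof
      assume "N = 0"
      then have "\<And>P. psd D P \<Longrightarrow> P \<noteq> 0\<^sub>m D D \<Longrightarrow> pd D P" using prim by simp
      then show False using prim0_false[of D] False by simp
    qed
    have "mult_domain D (\<phi> ^^ N) \<subseteq> Sc"
    proof
      fix a assume a: "a \<in> mult_domain D (\<phi> ^^ N)"
      have "\<exists>c. a = c \<cdot>\<^sub>m 1\<^sub>m D"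
        by (rule scalar_of_md[OF lm_pow[OF lin] schw_pow[OF lin S pos] pow_unital[of \<phi> D, OF u] prim _ a])
           (use False in simp_all)
      then show "a \<in> Sc" unfolding Sc_def by blast
    qed
    then show ?thesis using N by (intro exI[of _ N]) simp
  qed
  then obtain k where k: "1 \<le> k" and Mk: "mult_domain D (\<phi> ^^ k) \<subseteq> Sc" by blast
  have inter: "mult_domain_inter D \<phi> = Sc"
  proof
    show "mult_domain_inter D \<phi> \<subseteq> Sc"
      using Mk k unfolding mult_domain_inter_def by blast
    show "Sc \<subseteq> mult_domain_inter D \<phi>"
      unfolding mult_domain_inter_def using sub by blast
  qed
  have Mk': "mult_domain D (\<phi> ^^ k) = Sc" using Mk sub[of k] by blast
  have ex: "\<exists>k. 1 \<le> k \<and> mult_domain_inter D \<phi> = mult_domain D (\<phi> ^^ k)"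
    using k Mk' inter by auto
  have "1 \<le> kappa D \<phi> \<and> mult_domain_inter D \<phi> = mult_domain D (\<phi> ^^ kappa D \<phi>)"
    unfolding kappa_def by (rule LeastI_ex[OF ex])
  then have "mult_domain_inf D \<phi> = mult_domain_inter D \<phi>"
    unfolding mult_domain_inf_def by simp
  then show ?thesis using inter unfolding Sc_def by simp
qed

end
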